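(* Assume the standing setup below. Then for every phase change number $s_i$ of $X$ with $i\ge 1$, the function $\pi_0V_{s_i}(X)\to\pi_0V_{s_i}(Y)$, $[x]_{s_i,X}\mapsto[x]_{s_i,Y}$, induced by the inclusion $X\subseteq Y$, is a bijection.
   Context: For a finite set $Z\subset\mathbb{R}^n$ and a real number $s\ge 0$, the Vietoris–Rips complex $V_s(Z)$ is the simplicial complex with vertex set $Z$ whose simplices are the nonempty subsets $\sigma\subseteq Z$ with $d(z,z')\le s$ for all $z,z'\in\sigma$ ($d$ the Euclidean distance). For $z\in Z$, $[z]_{s,Z}\subseteq Z$ denotes the set of vertices of the path component of $V_s(Z)$ containing $z$, and $\pi_0V_s(Z)$ is the set of path components. Standing setup: $X\subset\mathbb{R}^n$ is a finite set with at least two points, $y\in\mathbb{R}^n\setminus X$, $Y=X\sqcup\{y\}$. The phase change numbers of $X$ are the distinct values $0=s_0<s_1<\dots<s_k$ of $d(x,x')$ for $x,x'\in X$. There are $x_0\in X$ and a real $r>0$ with $d(y,x_0)<r$ and $r<s_{i+1}-s_i$ for all $0\le i<k$. *)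

theory Defs
  imports "HOL-Analysis.Analysis"
begin

definition VR :: "real \<Rightarrow> 'a::metric_space set \<Rightarrow> 'a set set" where
  "VR s Z = {\<sigma>. \<sigma> \<noteq> {} \<and> \<sigma> \<subseteq> Z \<and> (\<forall>z\<in>\<sigma>. \<forall>z'\<in>\<sigma>. dist z z' \<le> s)}"

definition VR_edge :: "real \<Rightarrow> 'a::metric_space set \<Rightarrow> ('a \<times> 'a) set" where
  "VR_edge s Z = {(z, z'). {z, z'} \<in> VR s Z}"

text \<open>Vertex set of the path component of V_s(Z) containing z, i.e. [z]_{s,Z}:
  vertices reachable from z by an edge path in the complex.\<close>
definition VR_comp :: "real \<Rightarrow> 'a::metric_space set \<Rightarrow> 'a \<Rightarrow> 'a set" where
  "VR_comp s Z z = {z'. (z, z') \<in> (VR_edge s Z)\<^sup>*}"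

text \<open>pi_0 V_s(Z), components represented by their vertex sets.\<close>
definition VR_pi0 :: "real \<Rightarrow> 'a::metric_space set \<Rightarrow> 'a set set" where
  "VR_pi0 s Z = VR_comp s Z ` Z"

definition phase_changes :: "'a::metric_space set \<Rightarrow> real list" where
  "phase_changes X = sorted_list_of_set {dist x x' | x x'. x \<in> X \<and> x' \<in> X}"

end

theory Submission
  imports Defs
begin

lemma edge_iff:
  assumes "s \<ge> 0"
  shows "(a,b) \<in> VR_edge s Z \<longleftrightarrow> a \<in> Z \<and> b \<in> Z \<and> dist a b \<le> s"
  using assms unfolding VR_edge_def VR_def by (auto simp: dist_commute)

lemma edge_sym: "(a,b) \<in> VR_edge s Z \<Longrightarrow> (b,a) \<in> VR_edge s Z"
  unfolding VR_edge_def by (auto simp: insert_commute)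

lemma rtr_sym:
  assumes "(a,b) \<in> (VR_edge s Z)\<^sup>*" shows "(b,a) \<in> (VR_edge s Z)\<^sup>*"
  using assms
proof (induction rule: rtrancl_induct)
  case base then show ?case by simp
next
  case (step b c)
  then show ?case using edge_sym by (meson converse_rtrancl_into_rtrancl)
qed

lemma comp_eq_iff:
  "VR_comp s Z a = VR_comp s Z b \<longleftrightarrow> (a,b) \<in> (VR_edge s Z)\<^sup>*"
proof
  assume "VR_comp s Z a = VR_comp s Z b"
  moreover have "b \<in> VR_comp s Z b" unfolding VR_comp_def by simp
  ultimately show "(a,b) \<in> (VR_edge s Z)\<^sup>*" unfolding VR_comp_def by auto
next
  assume h: "(a,b) \<in> (VR_edge s Z)\<^sup>*"
  then have h': "(b,a) \<in> (VR_edge s Z)\<^sup>*" by (rule rtr_sym)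
  show "VR_comp s Z a = VR_comp s Z b" unfolding VR_comp_def
    using h h' by (auto intro: rtrancl_trans)
qed

lemma edge_mono: "VR_edge s X \<subseteq> VR_edge s (insert y X)"
  unfolding VR_edge_def VR_def by auto

theorem corollary12:
  fixes X :: "(real ^ 'n) set" and y x0 :: "real ^ 'n" and r :: real
  assumes "finite X" and "card X \<ge> 2"
    and "y \<notin> X"
    and "x0 \<in> X" and "r > 0" and "dist y x0 < r"
    and "\<forall>i. i + 1 < length (phase_changes X) \<longrightarrow>
           r < phase_changes X ! (i + 1) - phase_changes X ! i"
    and "1 \<le> i" and "i < length (phase_changes X)"
  shows "(\<forall>x\<in>X. \<forall>x'\<in>X.
            VR_comp (phase_changes X ! i) X x = VR_comp (phase_changes X ! i) X x' \<longrightarrow>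
            VR_comp (phase_changes X ! i) (insert y X) x = VR_comp (phase_changes X ! i) (insert y X) x')
      \<and> bij_betw (\<lambda>C. VR_comp (phase_changes X ! i) (insert y X) (SOME x. x \<in> C))
           (VR_pi0 (phase_changes X ! i) X) (VR_pi0 (phase_changes X ! i) (insert y X))"
proof -
  define L where "L = phase_changes X"
  define s where "s = L ! i"
  define D where "D = {dist x x' | x x'. x \<in> X \<and> x' \<in> X}"
  have finD: "finite D"
  proof -
    have "D = (\<lambda>(x,x'). dist x x') ` (X \<times> X)" unfolding D_def by auto
    then show ?thesis using assms(1) by simp
  qed
  have setL: "set L = D" unfolding L_def phase_changes_def D_def[symmetric] using finD by simp
  have sortL: "sorted L" unfolding L_def phase_changes_def by simp
  have gap: "\<And>j. j + 1 < length L \<Longrightarrow> r < L ! (j+1) - L ! j" using assms(7) L_def by auto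
  have L0: "L ! 0 \<ge> 0"
  proof -
    have "0 < length L" using assms(9) unfolding L_def by linarith
    then have "L ! 0 \<in> set L" by (rule nth_mem)
    then show ?thesis using setL D_def by auto
  qed
  have s_big: "s > r"
  proof -
    have "r < L!1 - L!0" using gap[of 0] assms(8,9) L_def by auto
    moreover have "L!1 \<le> L!i" using sorted_nth_mono[OF sortL assms(8)] assms(9) L_def by auto
    ultimately show ?thesis using L0 s_def by auto
  qed
  have s0: "s \<ge> 0" using s_big assms(5) by auto
  have key: "dist a b \<le> s" if "a \<in> X" "b \<in> X" "dist a b < s + r" for a b
  proof -
    have "dist a b \<in> set L" using setL D_def that by auto
    then obtain j where j: "j < length L" "L ! j = dist a b" by (auto simp: in_set_conv_nth)
    show ?thesis
    proof (cases "j \<le> i")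
      case True then show ?thesis using sorted_nth_mono[OF sortL True] assms(9) L_def j s_def by auto
    next
      case False
      then have "i + 1 \<le> j" by auto
      then have "L!(i+1) \<le> L!j" using sorted_nth_mono[OF sortL _ j(1)] by blast
      moreover have "r < L!(i+1) - L!i" using gap[of i] False j by auto
      ultimately show ?thesis using j that s_def by auto
    qed
  qed
  let ?RX = "VR_edge s X" and ?RY = "VR_edge s (insert y X)"
  have part1: "(\<forall>x\<in>X. \<forall>x'\<in>X. VR_comp s X x = VR_comp s X x' \<longrightarrow>
            VR_comp s (insert y X) x = VR_comp s (insert y X) x')"
    using edge_mono rtrancl_mono unfolding comp_eq_iff by blast
  define g where "g z = (if z = y then x0 else z)" for z
  have gstep: "(g a, g b) \<in> ?RX\<^sup>*" if "(a,b) \<in> ?RY" for a b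
  proof -
    have ab: "a \<in> insert y X" "b \<in> insert y X" "dist a b \<le> s" using that edge_iff[OF s0, of a b "insert y X"] by auto
    have yx: "(x0, c) \<in> ?RX" if "c \<in> X" "dist y c \<le> s" for c
    proof -
      have "dist x0 c \<le> dist x0 y + dist y c" by (rule dist_triangle)
      then have "dist x0 c < s + r" using assms(6) that by (simp add: dist_commute)
      then have "dist x0 c \<le> s" using key assms(4) that by auto
      then show ?thesis using edge_iff[OF s0] assms(4) that by auto
    qed
    show ?thesis
    proof (cases "a = y")
      case True
      show ?thesis
      proof (cases "b = y")
        case True then show ?thesis using \<open>a = y\<close> by simp
      next
        case False
        then have "b \<in> X" using ab by auto
        then have "(x0, b) \<in> ?RX" using yx ab True by auto
        then show ?thesis using True False g_def by auto
      qed
    next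
      case False
      then have aX: "a \<in> X" using ab by auto
      show ?thesis
      proof (cases "b = y")
        case True
        then have "(x0, a) \<in> ?RX" using yx aX ab by (auto simp: dist_commute)
        then have "(a, x0) \<in> ?RX" by (rule edge_sym)
        then show ?thesis using True False g_def by auto
      next
        case False
        then have "(a,b) \<in> ?RX" using aX ab edge_iff[OF s0] by auto
        then show ?thesis using False \<open>a \<noteq> y\<close> g_def by auto
      qed
    qed
  qed
  have bk: "\<And>a b. (a,b) \<in> ?RY\<^sup>* \<Longrightarrow> (g a, g b) \<in> ?RX\<^sup>*"
  proof -
    fix a b assume "(a,b) \<in> ?RY\<^sup>*"
    then show "(g a, g b) \<in> ?RX\<^sup>*"
  proof (induction rule: rtrancl_induct)
    case base then show ?case by simp
  next
    case (step b c) then show ?case using gstep by (meson rtrancl_trans)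
  qed
  qed
  have gX: "g z = z" if "z \<in> X" for z using that assms(3) g_def by auto
  have fval: "VR_comp s (insert y X) (SOME x. x \<in> VR_comp s X z) = VR_comp s (insert y X) z"
    if "z \<in> X" for z
  proof -
    have "z \<in> VR_comp s X z" unfolding VR_comp_def by simp
    then have "(SOME x. x \<in> VR_comp s X z) \<in> VR_comp s X z" by (rule someI)
    then have h: "(z, SOME x. x \<in> VR_comp s X z) \<in> ?RX\<^sup>*" unfolding VR_comp_def by simp
    then have "(z, SOME x. x \<in> VR_comp s X z) \<in> ?RY\<^sup>*" using edge_mono rtrancl_mono by blast
    then show ?thesis using comp_eq_iff by metis
  qed
  have "bij_betw (\<lambda>C. VR_comp s (insert y X) (SOME x. x \<in> C)) (VR_pi0 s X) (VR_pi0 s (insert y X))"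
    unfolding bij_betw_def
  proof (intro conjI)
    show "inj_on (\<lambda>C. VR_comp s (insert y X) (SOME x. x \<in> C)) (VR_pi0 s X)"
    proof (rule inj_onI)
      fix C C' assume C: "C \<in> VR_pi0 s X" "C' \<in> VR_pi0 s X"
        and eq: "VR_comp s (insert y X) (SOME x. x \<in> C) = VR_comp s (insert y X) (SOME x. x \<in> C')"
      obtain z z' where z: "z \<in> X" "z' \<in> X" "C = VR_comp s X z" "C' = VR_comp s X z'"
        using C unfolding VR_pi0_def by auto
      have "VR_comp s (insert y X) z = VR_comp s (insert y X) z'" using eq fval z by simp
      then have "(z,z') \<in> ?RY\<^sup>*" using comp_eq_iff by metis
      then have "(g z, g z') \<in> ?RX\<^sup>*" by (rule bk)
      then have "(z, z') \<in> ?RX\<^sup>*" using gX z by simp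
      then show "C = C'" using z comp_eq_iff by metis
    qed
  next
    show "(\<lambda>C. VR_comp s (insert y X) (SOME x. x \<in> C)) ` VR_pi0 s X = VR_pi0 s (insert y X)"
    proof
      show "(\<lambda>C. VR_comp s (insert y X) (SOME x. x \<in> C)) ` VR_pi0 s X \<subseteq> VR_pi0 s (insert y X)"
        unfolding VR_pi0_def using fval by auto
    next
      show "VR_pi0 s (insert y X) \<subseteq> (\<lambda>C. VR_comp s (insert y X) (SOME x. x \<in> C)) ` VR_pi0 s X"
      proof
        fix C assume "C \<in> VR_pi0 s (insert y X)"
        then obtain z where z: "z \<in> insert y X" "C = VR_comp s (insert y X) z"
          unfolding VR_pi0_def by auto
        obtain w where w: "w \<in> X" "C = VR_comp s (insert y X) w"
        proof (cases "z = y")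
          case True
          have "(y, x0) \<in> ?RY" using edge_iff[OF s0, of y x0 "insert y X"] assms(4,6) s_big by auto
          then have "VR_comp s (insert y X) y = VR_comp s (insert y X) x0"
            using comp_eq_iff by blast
          then show ?thesis using that True z assms(4) by auto
        next
          case False then show ?thesis using that z by auto
        qed
        show "C \<in> (\<lambda>C. VR_comp s (insert y X) (SOME x. x \<in> C)) ` VR_pi0 s X"
        proof (rule image_eqI)
          show "VR_comp s X w \<in> VR_pi0 s X" unfolding VR_pi0_def using w(1) by (rule imageI)
          show "C = VR_comp s (insert y X) (SOME x. x \<in> VR_comp s X w)" using fval[OF w(1)] w(2) by simp
        qed
      qed
    qed
  qed
  with part1 have "?thesis" unfolding s_def L_def by (intro conjI)
  then show ?thesis .
qed

end
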